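(* Let $\mathbf b=b_0b_1b_2\cdots\in\{1,-1\}^{\mathbb N}$. Let $t\ge1$, $0\le u\le t$ and $0\le p\le 2^{t-u}-1$ be integers. Then (1) for each $k\ge0$ such that $k\le u-2$ or $k\ge t-1$, we have $\mathcal E_{k,b_k}(\ell_{t-1}+2^u p,\,2^u,\,2^{t-u})=\mathbf 0$; (2) moreover, $\mathcal E_{k,b}(\ell_{t-1}+2^u p,\,2^u,\,2^{t-u})=\mathbf 0$ for both $b\in\{-1,1\}$ and each $k\ge0$ such that $k\le u-2$ or $k\ge t+3$.
   Context: For integers $a$ and $N\ge1$, $(a \bmod N)$ denotes the unique integer in $\{0,\dots,N-1\}$ congruent to $a$ modulo $N$; we write $a\succ c \pmod N$ iff $(a\bmod N)>(c\bmod N)$. For $b\in\{-1,1\}$, $k\ge0$ and integers $0\le\ell\le n$, let $\varepsilon_{k,b}(\ell,n)=1$ if $n-\ell \succ (2+b)\cdot 2^k-(\ell+1) \pmod{2^{k+2}}$ and $\varepsilon_{k,b}(\ell,n)=0$ otherwise. For $s\ge0$, $d,m\ge1$, $\mathcal E_{k,b}(s,d,m)=\big(\varepsilon_{k,b}(s+jd,s+(j+1)d)\big)_{j=0}^{m-1}$, and $\mathbf 0$ is the zero vector. For $x_0,x_1,x_2,x_3\in\{1,-1\}$, $\ell(x_0,x_1,x_2,x_3)$ is given by the table (listing $(x_0,x_1,x_2,x_3)\mapsto \ell$): $(1,1,1,1)\mapsto7$, $(-1,1,1,1)\mapsto1$, $(1,-1,1,1)\mapsto3$, $(-1,-1,1,1)\mapsto5$,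 $(1,1,-1,1)\mapsto7$, $(-1,1,-1,1)\mapsto9$, $(1,-1,-1,1)\mapsto11$, $(-1,-1,-1,1)\mapsto5$, $(1,1,1,-1)\mapsto23$, $(-1,1,1,-1)\mapsto1$, $(1,-1,1,-1)\mapsto3$, $(-1,-1,1,-1)\mapsto21$, $(1,1,-1,-1)\mapsto23$, $(-1,1,-1,-1)\mapsto9$, $(1,-1,-1,-1)\mapsto11$, $(-1,-1,-1,-1)\mapsto21$. For $t\ge0$, $\ell_t:=2^t\,\ell(b_t,b_{t+1},b_{t+2},b_{t+3})$. *)

theory Defs
  imports Main
begin

text \<open>a \<succ> c (mod N) iff (a mod N) > (c mod N); for N \<ge> 1 Isabelle's int mod is
  the least nonnegative residue.\<close>
definition succ_mod :: "int \<Rightarrow> int \<Rightarrow> int \<Rightarrow> bool" where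
  "succ_mod a c N \<longleftrightarrow> a mod N > c mod N"

definition eps :: "nat \<Rightarrow> int \<Rightarrow> int \<Rightarrow> int \<Rightarrow> int" where
  "eps k b l n = (if succ_mod (n - l) ((2 + b) * 2 ^ k - (l + 1)) (2 ^ (k + 2)) then 1 else 0)"

definition calE :: "nat \<Rightarrow> int \<Rightarrow> int \<Rightarrow> int \<Rightarrow> nat \<Rightarrow> int list" where
  "calE k b s d m = map (\<lambda>j. eps k b (s + int j * d) (s + (int j + 1) * d)) [0..<m]"

definition ell :: "int \<Rightarrow> int \<Rightarrow> int \<Rightarrow> int \<Rightarrow> int" where
  "ell x0 x1 x2 x3 =
    (if x3 = 1 then
       (if x2 = 1 then
          (if x1 = 1 then (if x0 = 1 then 7 else 1) else (if x0 = 1 then 3 else 5))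
        else
          (if x1 = 1 then (if x0 = 1 then 7 else 9) else (if x0 = 1 then 11 else 5)))
     else
       (if x2 = 1 then
          (if x1 = 1 then (if x0 = 1 then 23 else 1) else (if x0 = 1 then 3 else 21))
        else
          (if x1 = 1 then (if x0 = 1 then 23 else 9) else (if x0 = 1 then 11 else 21))))"

definition ellt :: "(nat \<Rightarrow> int) \<Rightarrow> nat \<Rightarrow> int" where
  "ellt b t = 2 ^ t * ell (b t) (b (t + 1)) (b (t + 2)) (b (t + 3))"

end

theory Submission
  imports Defs
begin

lemma calE_zero:
  assumes "\<And>j. j < m \<Longrightarrow> eps k c (s + int j * d) (s + (int j + 1) * d) = 0"
  shows "calE k c s d m = replicate m 0"
  using assms by (simp add: list_eq_iff_nth_eq calE_def)

lemma eps_zero: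
  assumes "(n - l) mod 2^(k+2) \<le> ((2+c)*2^k - (l+1)) mod 2^(k+2)"
  shows "eps k c l n = 0"
  using assms by (simp add: eps_def succ_mod_def)

lemma key:
  fixes M A r D Q :: int
  assumes "M > 0" "Q \<ge> 4" "0 \<le> A" "A < Q" "A = 0 \<or> 4 \<le> A" "1 \<le> r"
    "r \<le> 4*M - 2*D + 1" "1 \<le> D" "D \<le> 2*M"
  shows "D mod (M*Q) \<le> (M*A - r) mod (M*Q)"
proof -
  have q: "M*Q \<ge> M*4" using assms by (intro mult_left_mono) auto
  have d: "D mod (M*Q) = D" using assms q by (intro mod_pos_pos_trivial) linarith+
  show ?thesis
  proof (cases "A = 0")
    case True
    have "(M*A - r) mod (M*Q) = (M*Q - r + (-1)*(M*Q)) mod (M*Q)" using True by simp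
    also have "\<dots> = (M*Q - r) mod (M*Q)" by (rule mod_mult_self1)
    also have "\<dots> = M*Q - r" using assms q by (intro mod_pos_pos_trivial) linarith+
    finally show ?thesis using d q assms by linarith
  next
    case False
    then have A4: "4 \<le> A" using assms by auto
    have a1: "M*A \<ge> M*4" using assms A4 by (intro mult_left_mono) auto
    have a2: "M*A < M*Q" using assms by simp
    have "(M*A - r) mod (M*Q) = M*A - r" using assms a1 a2 by (intro mod_pos_pos_trivial) linarith+
    then show ?thesis using d a1 assms by linarith
  qed
qed

lemma table:
  assumes "x0 \<in> {1,-1}" "x1 \<in> {1,-1}" "x2 \<in> {1,-1}" "x3 \<in> {1,-1}" "i < 4"
  shows "((2 + [x0,x1,x2,x3]!i) * 2^i - ell x0 x1 x2 x3) mod 2^(i+2) = 0 \<or>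
         4 \<le> ((2 + [x0,x1,x2,x3]!i) * 2^i - ell x0 x1 x2 x3) mod (2::int)^(i+2)"
proof -
  have "i = 0 \<or> i = 1 \<or> i = 2 \<or> i = 3" using assms by auto
  then show ?thesis using assms(1-4) by (auto simp: ell_def)
qed

lemma ell_bounds:
  assumes "x0 \<in> {1,-1}" "x1 \<in> {1,-1}" "x2 \<in> {1,-1}" "x3 \<in> {1,-1}"
  shows "1 \<le> ell x0 x1 x2 x3 \<and> ell x0 x1 x2 x3 \<le> 23"
  using assms by (auto simp: ell_def)


lemma ell_cases:
  assumes "x0 \<in> {1,-1}" "x1 \<in> {1,-1}" "x2 \<in> {1,-1}" "x3 \<in> {1,-1}"
  shows "ell x0 x1 x2 x3 \<le> 11 \<or> ell x0 x1 x2 x3 \<ge> 21"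
  using assms by (auto simp: ell_def)

lemma nth_helper: assumes "i = 0 \<or> i = 1 \<or> i = 2 \<or> i = (3::nat)"
  shows "[b (t-1), b (t-1+1), b (t-1+2), b (t-1+3::nat)] ! i = (b::nat\<Rightarrow>int) ((t-1)+i)"
  using assms by (elim disjE) simp_all

theorem lemma5p2:
  fixes b :: "nat \<Rightarrow> int" and t u :: nat and p :: int
  assumes hb: "\<forall>i. b i \<in> {1, -1}"
    and ht: "t \<ge> 1" and hu: "u \<le> t"
    and hp0: "0 \<le> p" and hp1: "p \<le> 2 ^ (t - u) - 1"
  shows "(\<forall>k. (k + 2 \<le> u \<or> k + 1 \<ge> t) \<longrightarrow>
            calE k (b k) (ellt b (t - 1) + 2 ^ u * p) (2 ^ u) (2 ^ (t - u))
              = replicate (2 ^ (t - u)) 0)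
       \<and> (\<forall>k. \<forall>c \<in> {-1, 1::int}. (k + 2 \<le> u \<or> k \<ge> t + 3) \<longrightarrow>
            calE k c (ellt b (t - 1) + 2 ^ u * p) (2 ^ u) (2 ^ (t - u))
              = replicate (2 ^ (t - u)) 0)"
proof -
  define M :: int where "M = 2^(t-1)"
  define L where "L = ell (b (t-1)) (b (t-1+1)) (b (t-1+2)) (b (t-1+3))"
  define E where "E = ellt b (t-1)"
  define D :: int where "D = 2^u"
  have Mpos: "M > 0" by (simp add: M_def)
  have M2: "(2::int)^t = 2*M" unfolding M_def using ht
    by (metis Suc_diff_1 less_le_trans power_Suc zero_less_one)
  have EML: "E = M * L" by (simp add: E_def M_def L_def ellt_def)
  have Lb: "1 \<le> L \<and> L \<le> 23" unfolding L_def using hb by (intro ell_bounds) auto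
  have EL1: "E \<le> 23 * M" using EML Lb Mpos by (simp add: mult_right_mono)
  have EL0: "E \<ge> M" using EML Lb Mpos by (simp add: mult_left_mono)
  have D1: "1 \<le> D" by (simp add: D_def)
  have Dt: "D \<le> 2^t" unfolding D_def using hu by (intro power_increasing) auto
  have Dtu: "D * 2^(t-u) = 2^t" unfolding D_def using hu by (simp add: power_add[symmetric])
  have rb: "1 \<le> D*(p + int j) + 1 \<and> D*(p + int j) + 1 \<le> 4*M - 2*D + 1"
    if "j < 2^(t-u)" for j
  proof -
    have "int j < 2^(t-u)" using that by (metis of_nat_less_iff of_nat_numeral of_nat_power)
    then have "p + int j \<le> 2*2^(t-u) - 2" using hp1 by linarith
    then have "D*(p + int j) \<le> D*(2*2^(t-u) - 2)" using D1 by (intro mult_left_mono) auto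
    also have "\<dots> = 2*2^t - 2*D" using Dtu by (simp add: algebra_simps)
    finally have "D*(p + int j) \<le> 4*M - 2*D" using M2 by linarith
    moreover have "0 \<le> D*(p + int j)" using D1 hp0 by simp
    ultimately show ?thesis by linarith
  qed
  have lj: "(E + D*p + int j * D + 1) = E + (D*(p + int j) + 1)" for j
    by (simp add: algebra_simps)
  have nl: "(E + D*p + (int j + 1) * D) - (E + D*p + int j * D) = D" for j
    by (simp add: algebra_simps)
  have cA: "calE k c (E + D*p) D (2^(t-u)) = replicate (2^(t-u)) 0" if "k + 2 \<le> u" for k c
  proof (rule calE_zero)
    fix j assume "j < (2::nat)^(t-u)"
    have "(2::int)^(k+2) dvd D" unfolding D_def using that by (intro le_imp_power_dvd) simp
    then have "D mod 2^(k+2) = 0" by simp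
    then show "eps k c (E + D*p + int j * D) (E + D*p + (int j + 1) * D) = 0"
      by (intro eps_zero) (simp only: nl, simp)
  qed
  have cB: "calE k c (E + D*p) D (2^(t-u)) = replicate (2^(t-u)) 0"
    if "k \<ge> t + 3" "c \<in> {-1,1}" for k c
  proof (rule calE_zero)
    fix j assume j: "j < (2::nat)^(t-u)"
    define r where "r = D*(p + int j) + 1"
    have r: "1 \<le> r" "r \<le> 4*M - 2*D + 1" using rb[OF j] by (auto simp: r_def)
    have K: "(2::int)^(t+3) \<le> 2^k" using that by (intro power_increasing) auto
    have K2: "(2::int)^(t+3) = 16 * M" using M2 by (simp add: power_add)
    have N: "(2::int)^(k+2) = 4 * 2^k" by simp
    define X where "X = (2 + c) * 2^k - (E + r)"
    have Dm: "D mod 2^(k+2) = D" using K K2 N Dt M2 D1 Mpos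
      by (intro mod_pos_pos_trivial) linarith+
    have "D \<le> X mod 2^(k+2)"
    proof (cases "c = 1")
      case True
      have XX: "X = 3 * 2^k - (E + r)" unfolding X_def True by simp
      have "X mod 2^(k+2) = X" using EL0 True K K2 N EL1 r M2 Dt D1 Mpos unfolding XX
        by (intro mod_pos_pos_trivial) linarith+
      then show ?thesis using XX Mpos D1 EL0 True K K2 EL1 r M2 Dt by linarith
    next
      case False
      then have c: "c = -1" using that by auto
      have XX: "X = 2^k - (E + r)" unfolding X_def c by simp
      show ?thesis
      proof (cases "k = t + 3")
        case False
        then have "(2::int)^(t+4) \<le> 2^k" using that by (intro power_increasing) auto
        moreover have "(2::int)^(t+4) = 32 * M" using M2 by (simp add: power_add)
        ultimately have K3: "32 * M \<le> 2^k" by simp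
        have "X mod 2^(k+2) = X" using EL0 c K3 N EL1 r M2 Dt D1 Mpos unfolding XX
          by (intro mod_pos_pos_trivial) linarith+
        then show ?thesis using XX Mpos D1 EL0 c K3 EL1 r M2 Dt by linarith
      next
        case True
        then have K3: "2^k = 16 * M" using K2 by simp
        have "L \<le> 11 \<or> L \<ge> 21" unfolding L_def using hb by (intro ell_cases) auto
        then show ?thesis
        proof
          assume L11: "L \<le> 11"
          have "E \<le> 11 * M" using EML L11 Mpos by (simp add: mult_right_mono)
          moreover have "X mod 2^(k+2) = X" using EL0 c K3 N \<open>E \<le> 11 * M\<close> r M2 Dt D1 Mpos unfolding XX
            by (intro mod_pos_pos_trivial) linarith+
          ultimately show ?thesis using XX Mpos D1 EL0 c K3 r M2 Dt by linarith
        next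
          assume L21: "L \<ge> 21"
          have E21: "E \<ge> 21 * M" using EML L21 Mpos by (simp add: mult_left_mono)
          have "X mod 2^(k+2) = (X + 2^(k+2)) mod 2^(k+2)" by simp
          also have "\<dots> = X + 2^(k+2)" using EL0 c K3 N E21 EL1 r M2 Dt D1 Mpos unfolding XX
            by (intro mod_pos_pos_trivial) linarith+
          finally show ?thesis using XX Mpos D1 EL0 c K3 N EL1 r M2 Dt by linarith
        qed
      qed
    qed
    then have "D mod 2^(k+2) \<le> X mod 2^(k+2)" using Dm by simp
    then show "eps k c (E + D*p + int j * D) (E + D*p + (int j + 1) * D) = 0"
      by (intro eps_zero) (simp only: nl lj, simp add: X_def r_def)
  qed
  have cC: "calE k (b k) (E + D*p) D (2^(t-u)) = replicate (2^(t-u)) 0"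
    if "t - 1 \<le> k" "k < t + 3" for k
  proof (rule calE_zero)
    fix j assume j: "j < (2::nat)^(t-u)"
    define r where "r = D*(p + int j) + 1"
    have r: "1 \<le> r" "r \<le> 4*M - 2*D + 1" using rb[OF j] by (auto simp: r_def)
    define i where "i = k - (t - 1)"
    have ki: "k = (t-1) + i" and i4: "i < 4" using that ht by (auto simp: i_def)
    define Q :: int where "Q = 2^(i+2)"
    define K' where "K' = (2 + b k) * 2^i - L"
    have Q4: "Q \<ge> 4"
    proof -
      have "Q = 4 * 2^i" unfolding Q_def by (simp add: power_add)
      moreover have "(1::int) \<le> 2^i" by simp
      ultimately show ?thesis by linarith
    qed
    have N: "(2::int)^(k+2) = M * Q" by (simp add: ki M_def Q_def power_add)
    have c2: "(2 + b k) * 2^k - (E + r) = M * K' - r"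
    proof -
      have pk: "(2::int)^k = M * 2^i" by (simp add: ki M_def power_add)
      show ?thesis unfolding pk K'_def EML by (simp add: algebra_simps)
    qed
    have bi: "[b (t-1), b (t-1+1), b (t-1+2), b (t-1+3)] ! i = b k"
    proof -
      have "i = 0 \<or> i = 1 \<or> i = 2 \<or> i = 3" using i4 by auto
      then have "[b (t-1), b (t-1+1), b (t-1+2), b (t-1+3)] ! i = b ((t-1)+i)" by (rule nth_helper)
      then show ?thesis using ki by metis
    qed
    have A: "K' mod Q = 0 \<or> 4 \<le> K' mod Q"
    proof -
      have m: "b (t-1) \<in> {1,-1}" "b (t-1+1) \<in> {1,-1}" "b (t-1+2) \<in> {1,-1}" "b (t-1+3) \<in> {1,-1}"
        using hb by blast+
      show ?thesis using table[OF m i4] unfolding bi K'_def Q_def L_def .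
    qed
    have Q0: "Q > 0" using Q4 by simp
    have h1: "(M * K' - r) mod (M*Q) = ((M*K') mod (M*Q) - r) mod (M*Q)"
      by (rule mod_diff_left_eq[symmetric])
    have h2: "(M*K') mod (M*Q) = M * (K' mod Q)" by (rule mult_mod_right[symmetric])
    have eq: "(M * K' - r) mod (M*Q) = (M * (K' mod Q) - r) mod (M*Q)"
      unfolding h1 h2 by (rule refl)
    have "D mod (M*Q) \<le> (M * (K' mod Q) - r) mod (M*Q)"
    proof (rule key)
      show "0 \<le> K' mod Q" "K' mod Q < Q" using Q0 by simp_all
      show "D \<le> 2*M" using Dt M2 by linarith
    qed (use Mpos Q4 A r D1 in auto)
    then have "D mod 2^(k+2) \<le> ((2 + b k) * 2^k - (E + r)) mod 2^(k+2)"
      unfolding N c2 eq .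
    then show "eps k (b k) (E + D*p + int j * D) (E + D*p + (int j + 1) * D) = 0"
      by (intro eps_zero) (simp only: nl lj, simp add: r_def)
  qed
  show ?thesis
  proof (intro conjI allI ballI impI)
    fix k assume h: "k + 2 \<le> u \<or> t \<le> k + 1"
    show "calE k (b k) (ellt b (t - 1) + 2 ^ u * p) (2 ^ u) (2 ^ (t - u)) = replicate (2 ^ (t - u)) 0"
    proof -
      have "k + 2 \<le> u \<or> (t - 1 \<le> k \<and> k < t + 3) \<or> k \<ge> t + 3" using h by auto
      moreover have "b k \<in> {-1,1}" using hb by auto
      ultimately show ?thesis using cA cB cC unfolding E_def D_def by blast
    qed
  next
    fix k c assume "c \<in> {-1, 1::int}" "k + 2 \<le> u \<or> t + 3 \<le> k"
    then show "calE k c (ellt b (t - 1) + 2 ^ u * p) (2 ^ u) (2 ^ (t - u)) = replicate (2 ^ (t - u)) 0"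
      using cA cB unfolding E_def D_def by blast
  qed
qed

end
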